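(* For positive integers $n, m$ with $m \le n$ define $$f(n,m) = \sum_{k=0}^{m-1} \binom{n}{k} \left(\frac{m}{n}\right)^k \left(1 - \frac{m}{n}\right)^{n-k}.$$ Then $f(n,m) \geq \frac{3}{8}$ for all integers $n \geq 100$ and $12 \leq m \leq \frac{n}{2} + 1$.
   Context: $f(n,m)$ is the probability that a binomial random variable with $n$ trials and success probability $m/n$ is at most $m-1$. *)

theory Defs
  imports Complex_Main
begin

definition f :: "nat \<Rightarrow> nat \<Rightarrow> real" where
  "f n m = (\<Sum>k<m. real (n choose k) * (real m / real n) ^ k * (1 - real m / real n) ^ (n - k))"

end

theory Submission
  imports Defs
begin


definition tt :: "nat \<Rightarrow> nat \<Rightarrow> nat \<Rightarrow> real" where
  "tt n m k = real (n choose k) * (real m / real n) ^ k * (1 - real m / real n) ^ (n - k)"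

lemma f_tt: "f n m = (\<Sum>k<m. tt n m k)"
  unfolding f_def tt_def by simp

lemma tt_nonneg: "m \<le> n \<Longrightarrow> 0 < n \<Longrightarrow> tt n m k \<ge> 0"
  unfolding tt_def by (auto intro!: mult_nonneg_nonneg simp: field_simps)

lemma tt_zero: "n < k \<Longrightarrow> tt n m k = 0"
  unfolding tt_def by simp

lemma tt_sum: assumes "0 < n" shows "(\<Sum>k\<le>n. tt n m k) = 1"
proof -
  have "(\<Sum>k\<le>n. tt n m k) = (real m / real n + (1 - real m / real n)) ^ n"
    unfolding tt_def binomial_ring by simp
  thus ?thesis by simp
qed

lemma choose_rec: "real (Suc k) * real (n choose Suc k) = real (n - k) * real (n choose k)"
proof -
  have "Suc k * (n choose Suc k) = (n - k) * (n choose k)"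
    using binomial_absorption[of k n] binomial_absorb_comp[of n k] by simp
  hence "real (Suc k * (n choose Suc k)) = real ((n - k) * (n choose k))" by simp
  thus ?thesis by (simp only: of_nat_mult)
qed

lemma tt_rec: assumes "0 < n"
  shows "tt n m (Suc k) * real (Suc k) * (1 - real m / real n) = tt n m k * real (n - k) * (real m / real n)"
proof (cases "k < n")
  case True
  define a where "a = real m / real n"
  define b where "b = 1 - real m / real n"
  have T: "\<And>j. tt n m j = real (n choose j) * a ^ j * b ^ (n - j)"
    unfolding tt_def a_def b_def by simp
  have e: "b ^ (n - Suc k) * b = b ^ (n - k)"
    using True by (metis Suc_diff_Suc power_Suc2)
  have "tt n m (Suc k) * real (Suc k) * b
     = (real (Suc k) * real (n choose Suc k)) * a ^ k * a * (b ^ (n - Suc k) * b)"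
    unfolding T by (simp add: ac_simps)
  also have "\<dots> = tt n m k * real (n - k) * a"
    unfolding choose_rec e T by (simp add: ac_simps)
  finally show ?thesis unfolding a_def b_def .
next
  case False
  thus ?thesis by (simp add: tt_def)
qed

lemma tt_mom: assumes "0 < n" "j \<le> n"
  shows "(\<Sum>k\<le>j. (real m - real k) * tt n m k) = real (n - j) * (real m / real n) * tt n m j"
  using assms(2)
proof (induction j)
  case 0
  then show ?case using assms(1) by (simp add: tt_def field_simps)
next
  case (Suc j)
  have r: "tt n m (Suc j) * real (Suc j) * (1 - real m / real n) = tt n m j * real (n - j) * (real m / real n)"
    using tt_rec[OF assms(1)] .
  have nj: "real (n - j) = real (n - Suc j) + 1" using Suc.prems by linarith
  have "(\<Sum>k\<le>Suc j. (real m - real k) * tt n m k)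
      = tt n m j * real (n - j) * (real m / real n) + (real m - real (Suc j)) * tt n m (Suc j)"
    using Suc by (simp add: ac_simps)
  also have "\<dots> = tt n m (Suc j) * real (Suc j) * (1 - real m / real n) + (real m - real (Suc j)) * tt n m (Suc j)"
    by (simp only: r)
  also have "\<dots> = tt n m (Suc j) * (real (Suc j) * (1 - real m / real n) + (real m - real (Suc j)))"
    by (simp add: algebra_simps add_divide_distrib)
  also have "\<dots> = real (n - Suc j) * (real m / real n) * tt n m (Suc j)"
    using assms(1) nj by (simp add: field_simps)
  finally show ?case .
qed

lemma tt_mom0: assumes "0 < n" shows "(\<Sum>k\<le>n. (real m - real k) * tt n m k) = 0"
  using tt_mom[OF assms, of n] by simp

lemma G1: fixes m n :: nat assumes "m \<le> n"
  shows "(\<Sum>k<m. g k) = (\<Sum>j\<in>{1..n}. (if j \<le> m then g (m - j) else 0))"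
proof -
  have "(\<Sum>j\<in>{1..n}. (if j \<le> m then g (m - j) else 0)) = (\<Sum>j\<in>{1..m}. g (m - j))"
    using assms by (intro sum.mono_neutral_cong_right) auto
  also have "\<dots> = (\<Sum>k<m. g k)"
    by (rule sum.reindex_bij_witness[of _ "\<lambda>k. m - k" "\<lambda>k. m - k"]) auto
  finally show ?thesis by simp
qed

lemma G2: fixes m n :: nat assumes "m \<le> n" "\<And>k. n < k \<Longrightarrow> g k = 0"
  shows "(\<Sum>k\<in>{m<..n}. g k) = (\<Sum>j\<in>{1..n}. g (m + j))"
proof -
  have "(\<Sum>j\<in>{1..n}. g (m + j)) = (\<Sum>k\<in>{1+m..n+m}. g k)"
    by (rule sum.reindex_bij_witness[of _ "\<lambda>k. k - m" "\<lambda>j. m + j"]) auto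
  also have "\<dots> = (\<Sum>k\<in>{m<..n}. g k)"
    using assms by (intro sum.mono_neutral_cong_right) auto
  finally show ?thesis by simp
qed

lemma split3: fixes m n :: nat assumes "m \<le> n"
  shows "(\<Sum>k\<le>n. g k) = (\<Sum>k<m. g k) + g m + (\<Sum>k\<in>{m<..n}. g k)"
proof -
  have "{..n} = {..<m} \<union> {m} \<union> {m<..n}" using assms by auto
  hence "(\<Sum>k\<le>n. g k) = sum g ({..<m} \<union> {m} \<union> {m<..n})" by simp
  also have "\<dots> = sum g ({..<m} \<union> {m}) + (\<Sum>k\<in>{m<..n}. g k)"
    by (rule sum.union_disjoint) auto
  also have "sum g ({..<m} \<union> {m}) = (\<Sum>k<m. g k) + g m"
    by (subst sum.union_disjoint) auto
  finally show ?thesis .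
qed


lemma crossing:
  fixes x y :: "nat \<Rightarrow> real" and P :: "nat \<Rightarrow> bool" and n :: nat
  assumes x0: "x 0 = y 0"
    and Pmono: "\<And>i j. i \<le> j \<Longrightarrow> P j \<Longrightarrow> P i"
    and up: "\<And>j. P j \<Longrightarrow> y j \<le> x j \<Longrightarrow> y (Suc j) \<le> x (Suc j)"
    and down: "\<And>j. \<not> P j \<Longrightarrow> x j \<le> y j \<Longrightarrow> x (Suc j) \<le> y (Suc j)"
    and mom: "(\<Sum>j\<in>{1..n}. real j * x j) = (\<Sum>j\<in>{1..n}. real j * y j)"
  shows "(\<Sum>j\<in>{1..n}. y j) \<le> (\<Sum>j\<in>{1..n}. x j)"
proof (cases "\<forall>j. y j \<le> x j")
  case True
  thus ?thesis by (intro sum_mono) auto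
next
  case False
  then obtain j0 where j0: "x j0 < y j0" by (auto simp: not_le)
  define K where "K = (LEAST j. x j < y j)"
  have xK: "x K < y K" unfolding K_def by (rule LeastI[of _ j0]) (rule j0)
  have below: "y j \<le> x j" if "j < K" for j
    using not_less_Least[of j "\<lambda>j. x j < y j"] that unfolding K_def by auto
  have K0: "K > 0" using xK x0 by (cases K) auto
  have nP: "\<not> P (K - 1)"
  proof
    assume "P (K - 1)"
    moreover have "y (K - 1) \<le> x (K - 1)" using below K0 by simp
    ultimately have "y (Suc (K - 1)) \<le> x (Suc (K - 1))" by (rule up)
    with K0 xK show False by simp
  qed
  have above: "x j \<le> y j" if "K \<le> j" for j
    using that
  proof (induction j rule: dec_induct)
    case base thus ?case using xK by simp
  next
    case (step j)
    have "K - 1 \<le> j" using step.hyps(1) by simp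
    hence "\<not> P j" using nP Pmono[of "K - 1" j] by blast
    thus ?case using down step.IH by blast
  qed
  have trm: "(real K - real j) * (x j - y j) \<ge> 0" for j
  proof (cases "j < K")
    case True thus ?thesis using below[OF True] by simp
  next
    case False
    hence "x j \<le> y j" using above by simp
    moreover have "real K - real j \<le> 0" using False by simp
    ultimately show ?thesis by (simp add: mult_nonpos_nonpos)
  qed
  have "0 \<le> (\<Sum>j\<in>{1..n}. (real K - real j) * (x j - y j))"
    by (intro sum_nonneg) (use trm in auto)
  also have "\<dots> = real K * ((\<Sum>j\<in>{1..n}. x j) - (\<Sum>j\<in>{1..n}. y j))
      - ((\<Sum>j\<in>{1..n}. real j * x j) - (\<Sum>j\<in>{1..n}. real j * y j))"
    by (simp add: left_diff_distrib right_diff_distrib sum_subtractf sum_distrib_left)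
  also have "\<dots> = real K * ((\<Sum>j\<in>{1..n}. x j) - (\<Sum>j\<in>{1..n}. y j))"
    using mom by simp
  finally show ?thesis using K0 by (simp add: zero_le_mult_iff)
qed


lemma ratio_lb:
  fixes x x' D E c :: real
  assumes "x' * D = x * E" "D > 0" "c * D \<le> E" "x \<ge> 0"
  shows "c * x \<le> x'"
proof -
  have "(c * x) * D \<le> x * E" using mult_left_mono[OF assms(3) assms(4)] by (simp add: ac_simps)
  also have "\<dots> = x' * D" using assms(1) by simp
  finally show ?thesis using assms(2) by simp
qed

lemma setup_facts:
  fixes n m :: nat and x y :: "nat \<Rightarrow> real"
  assumes n0: "0 < n" and mn: "m \<le> n"
  and x_def: "x = (\<lambda>j. if j \<le> m then tt n m (m - j) else 0)"
    and y_def: "y = (\<lambda>j. tt n m (m + j))"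
  shows xr: "\<And>j. j < m \<Longrightarrow> x (Suc j) * ((real (n - m) + real j + 1) * real m) = x j * ((real m - real j) * real (n - m))"
    and xz: "\<And>j. m \<le> j \<Longrightarrow> x (Suc j) = 0"
    and yr: "\<And>j. y (Suc j) * ((real m + real j + 1) * real (n - m)) = y j * (real (n - (m + j)) * real m)"
    and yz: "\<And>j. n - m < j \<Longrightarrow> y j = 0"
    and x0: "x 0 = tt n m m" and y0: "y 0 = tt n m m"
    and xnn: "\<And>j. x j \<ge> 0" and ynn: "\<And>j. y j \<ge> 0"
    and Lsum: "f n m = (\<Sum>j\<in>{1..n}. x j)"
    and Rsum: "(\<Sum>k\<in>{m<..n}. tt n m k) = (\<Sum>j\<in>{1..n}. y j)"
    and total: "f n m + tt n m m + (\<Sum>j\<in>{1..n}. y j) = 1"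
    and mom: "(\<Sum>j\<in>{1..n}. real j * x j) = (\<Sum>j\<in>{1..n}. real j * y j)"
proof -
  have nn: "real (n - m) = real n - real m" using mn by simp
  have q: "1 - real m / real n = real (n - m) / real n" using n0 nn by (simp add: field_simps)
  show "x (Suc j) * ((real (n - m) + real j + 1) * real m) = x j * ((real m - real j) * real (n - m))"
    if "j < m" for j
  proof -
    have r: "tt n m (Suc (m - Suc j)) * real (Suc (m - Suc j)) * (1 - real m / real n)
       = tt n m (m - Suc j) * real (n - (m - Suc j)) * (real m / real n)" by (rule tt_rec[OF n0])
    have e1: "Suc (m - Suc j) = m - j" using that by simp
    have e2: "real (n - (m - Suc j)) = real (n - m) + real j + 1" using that mn by simp
    have e3: "real (m - j) = real m - real j" using that by simp
    from r have "tt n m (m - j) * (real m - real j) * real (n - m) = tt n m (m - Suc j) * (real (n - m) + real j + 1) * real m"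
      unfolding e1 e2 e3 q using n0 by (simp add: field_simps)
    thus ?thesis using that unfolding x_def by (simp add: ac_simps)
  qed
  show "\<And>j. m \<le> j \<Longrightarrow> x (Suc j) = 0" unfolding x_def by simp
  show "y (Suc j) * ((real m + real j + 1) * real (n - m)) = y j * (real (n - (m + j)) * real m)" for j
  proof -
    have r: "tt n m (Suc (m + j)) * real (Suc (m + j)) * (1 - real m / real n)
       = tt n m (m + j) * real (n - (m + j)) * (real m / real n)" by (rule tt_rec[OF n0])
    from r have "tt n m (Suc (m + j)) * (real m + real j + 1) * real (n - m) = tt n m (m + j) * real (n - (m + j)) * real m"
      unfolding q using n0 by (simp add: field_simps)
    thus ?thesis unfolding y_def by (simp add: ac_simps)
  qed
  show "\<And>j. n - m < j \<Longrightarrow> y j = 0" unfolding y_def by (intro tt_zero) (use mn in simp)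
  show "x 0 = tt n m m" "y 0 = tt n m m" unfolding x_def y_def by simp_all
  show xnn: "\<And>j. x j \<ge> 0" unfolding x_def using tt_nonneg[OF mn n0] by simp
  show ynn: "\<And>j. y j \<ge> 0" unfolding y_def using tt_nonneg[OF mn n0] by simp
  show L: "f n m = (\<Sum>j\<in>{1..n}. x j)" unfolding f_tt x_def by (rule G1[OF mn])
  show R: "(\<Sum>k\<in>{m<..n}. tt n m k) = (\<Sum>j\<in>{1..n}. y j)" unfolding y_def
    by (rule G2[OF mn]) (rule tt_zero)
  show "f n m + tt n m m + (\<Sum>j\<in>{1..n}. y j) = 1"
    using tt_sum[OF n0, of m] split3[OF mn, of "tt n m"] L R by (simp add: f_tt)
  have m0: "(\<Sum>k\<le>n. (real m - real k) * tt n m k) = 0" by (rule tt_mom0[OF n0])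
  have A: "(\<Sum>k<m. (real m - real k) * tt n m k) = (\<Sum>j\<in>{1..n}. real j * x j)"
  proof -
    have "(\<Sum>k<m. (real m - real k) * tt n m k) = (\<Sum>j\<in>{1..n}. (if j \<le> m then (real m - real (m - j)) * tt n m (m - j) else 0))"
      by (rule G1[OF mn])
    also have "\<dots> = (\<Sum>j\<in>{1..n}. real j * x j)"
      unfolding x_def by (intro sum.cong) auto
    finally show ?thesis .
  qed
  have B: "(\<Sum>k\<in>{m<..n}. (real m - real k) * tt n m k) = - (\<Sum>j\<in>{1..n}. real j * y j)"
  proof -
    have "(\<Sum>k\<in>{m<..n}. (real m - real k) * tt n m k) = (\<Sum>j\<in>{1..n}. (real m - real (m + j)) * tt n m (m + j))"
      by (rule G2[OF mn]) (simp add: tt_zero)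
    also have "\<dots> = (\<Sum>j\<in>{1..n}. - (real j * y j))"
      unfolding y_def by (intro sum.cong) auto
    finally show ?thesis by (simp add: sum_negf)
  qed
  show "(\<Sum>j\<in>{1..n}. real j * x j) = (\<Sum>j\<in>{1..n}. real j * y j)"
    using m0 split3[OF mn, of "\<lambda>k. (real m - real k) * tt n m k"] A B by simp
qed


lemma auxI0: fixes M N :: real assumes "M \<ge> 12" "N \<ge> 12"
  shows "12/13 * ((N + 0 + 1) * M) \<le> (M - 0) * N"
proof -
  have h: "M * N \<ge> 12 * M + 12 * N - 144"
    using mult_nonneg_nonneg[of "M - 12" "N - 12"] assms by (simp add: algebra_simps)
  have e1: "12/13 * ((N + 0 + 1) * M) = 12/13 * (M * N) + 12/13 * M" by (simp add: algebra_simps)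
  have e2: "(M - 0) * N = M * N - 0 * N" by (simp add: algebra_simps)
  show ?thesis unfolding e1 e2 using h assms by linarith
qed

lemma auxI1: fixes M N :: real assumes "M \<ge> 12" "N \<ge> 12"
  shows "11/14 * ((N + 1 + 1) * M) \<le> (M - 1) * N"
proof -
  have h: "M * N \<ge> 12 * M + 12 * N - 144"
    using mult_nonneg_nonneg[of "M - 12" "N - 12"] assms by (simp add: algebra_simps)
  have e1: "11/14 * ((N + 1 + 1) * M) = 11/14 * (M * N) + 22/14 * M" by (simp add: algebra_simps)
  have e2: "(M - 1) * N = M * N - 1 * N" by (simp add: algebra_simps)
  show ?thesis unfolding e1 e2 using h assms by linarith
qed

lemma auxI2: fixes M N :: real assumes "M \<ge> 12" "N \<ge> 12"
  shows "2/3 * ((N + 2 + 1) * M) \<le> (M - 2) * N"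
proof -
  have h: "M * N \<ge> 12 * M + 12 * N - 144"
    using mult_nonneg_nonneg[of "M - 12" "N - 12"] assms by (simp add: algebra_simps)
  have e1: "2/3 * ((N + 2 + 1) * M) = 2/3 * (M * N) + 6/3 * M" by (simp add: algebra_simps)
  have e2: "(M - 2) * N = M * N - 2 * N" by (simp add: algebra_simps)
  show ?thesis unfolding e1 e2 using h assms by linarith
qed

lemma auxII0: fixes M N :: real assumes "M \<ge> 49" "N \<ge> 49"
  shows "49/50 * ((N + 0 + 1) * M) \<le> (M - 0) * N"
proof -
  have h: "M * N \<ge> 49 * M + 49 * N - 2401"
    using mult_nonneg_nonneg[of "M - 49" "N - 49"] assms by (simp add: algebra_simps)
  have e1: "49/50 * ((N + 0 + 1) * M) = 49/50 * (M * N) + 49/50 * M" by (simp add: algebra_simps)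
  have e2: "(M - 0) * N = M * N - 0 * N" by (simp add: algebra_simps)
  show ?thesis unfolding e1 e2 using h assms by linarith
qed

lemma auxII1: fixes M N :: real assumes "M \<ge> 49" "N \<ge> 49"
  shows "48/51 * ((N + 1 + 1) * M) \<le> (M - 1) * N"
proof -
  have h: "M * N \<ge> 49 * M + 49 * N - 2401"
    using mult_nonneg_nonneg[of "M - 49" "N - 49"] assms by (simp add: algebra_simps)
  have e1: "48/51 * ((N + 1 + 1) * M) = 48/51 * (M * N) + 96/51 * M" by (simp add: algebra_simps)
  have e2: "(M - 1) * N = M * N - 1 * N" by (simp add: algebra_simps)
  show ?thesis unfolding e1 e2 using h assms by linarith
qed

lemma auxII2: fixes M N :: real assumes "M \<ge> 49" "N \<ge> 49"
  shows "47/52 * ((N + 2 + 1) * M) \<le> (M - 2) * N"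
proof -
  have h: "M * N \<ge> 49 * M + 49 * N - 2401"
    using mult_nonneg_nonneg[of "M - 49" "N - 49"] assms by (simp add: algebra_simps)
  have e1: "47/52 * ((N + 2 + 1) * M) = 47/52 * (M * N) + 141/52 * M" by (simp add: algebra_simps)
  have e2: "(M - 2) * N = M * N - 2 * N" by (simp add: algebra_simps)
  show ?thesis unfolding e1 e2 using h assms by linarith
qed

lemma auxII3: fixes M N :: real assumes "M \<ge> 49" "N \<ge> 49"
  shows "46/53 * ((N + 3 + 1) * M) \<le> (M - 3) * N"
proof -
  have h: "M * N \<ge> 49 * M + 49 * N - 2401"
    using mult_nonneg_nonneg[of "M - 49" "N - 49"] assms by (simp add: algebra_simps)
  have e1: "46/53 * ((N + 3 + 1) * M) = 46/53 * (M * N) + 184/53 * M" by (simp add: algebra_simps)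
  have e2: "(M - 3) * N = M * N - 3 * N" by (simp add: algebra_simps)
  show ?thesis unfolding e1 e2 using h assms by linarith
qed

lemma auxII4: fixes M N :: real assumes "M \<ge> 49" "N \<ge> 49"
  shows "45/54 * ((N + 4 + 1) * M) \<le> (M - 4) * N"
proof -
  have h: "M * N \<ge> 49 * M + 49 * N - 2401"
    using mult_nonneg_nonneg[of "M - 49" "N - 49"] assms by (simp add: algebra_simps)
  have e1: "45/54 * ((N + 4 + 1) * M) = 45/54 * (M * N) + 225/54 * M" by (simp add: algebra_simps)
  have e2: "(M - 4) * N = M * N - 4 * N" by (simp add: algebra_simps)
  show ?thesis unfolding e1 e2 using h assms by linarith
qed

theorem lemma3:
  fixes n m :: nat
  assumes "n \<ge> 100" and "12 \<le> m" and "real m \<le> real n / 2 + 1"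
  shows "f n m \<ge> 3 / 8"
proof -
  have n0: "0 < n" using assms(1) by simp
  have mn: "m \<le> n" using assms by linarith
  define x where "x = (\<lambda>j. if j \<le> m then tt n m (m - j) else 0)"
  define y where "y = (\<lambda>j. tt n m (m + j))"
  note F = setup_facts[OF n0 mn x_def y_def]
  note xr = F(1) and xz = F(2) and yr = F(3) and yz = F(4) and x0 = F(5) and y0 = F(6)
    and xnn = F(7) and ynn = F(8) and Lsum = F(9) and total = F(11) and mom = F(12)
  have NNe: "real (n - m) = real n - real m" using mn by simp
  have M12: "real m \<ge> 12" using assms(2) by simp
  have yNj: "real (n - (m + j)) = real (n - m) - real j" if "j \<le> n - m" for j
    using that mn by simp
  have xstep: "c * x j \<le> x (Suc j)"
    if "j < m" "c * ((real (n - m) + real j + 1) * real m) \<le> (real m - real j) * real (n - m)" for j c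
    by (rule ratio_lb[OF xr[OF that(1)] _ that(2) xnn]) (use M12 in simp)
  have ystep: "c * y j \<le> y (Suc j)"
    if "0 < n - m" "c * ((real m + real j + 1) * real (n - m)) \<le> real (n - (m + j)) * real m" for j c
    by (rule ratio_lb[OF yr _ that(2) ynn]) (use M12 that(1) in simp)
  have L5: "x 1 + x 2 + x 3 + x 4 + x 5 \<le> f n m"
  proof -
    have "(\<Sum>j\<in>{1..5}. x j) \<le> (\<Sum>j\<in>{1..n}. x j)"
      by (rule sum_mono2) (use assms(1) xnn in auto)
    moreover have "{1..5::nat} = {1,2,3,4,5}" by auto
    ultimately show ?thesis using Lsum by simp
  qed
  have R5: "y 1 + y 2 + y 3 + y 4 + y 5 \<le> (\<Sum>j\<in>{1..n}. y j)"
  proof -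
    have "(\<Sum>j\<in>{1..5}. y j) \<le> (\<Sum>j\<in>{1..n}. y j)"
      by (rule sum_mono2) (use assms(1) ynn in auto)
    moreover have "{1..5::nat} = {1,2,3,4,5}" by auto
    ultimately show ?thesis by simp
  qed
  show ?thesis
  proof (cases "m \<le> n - m")
    case True
    let ?M = "real m" and ?N = "real (n - m)"
    have NM: "?N \<ge> ?M" using True by simp
    define P where "P = (\<lambda>j::nat. real j * (real j + 1) * (?N + ?M) \<le> ?M * ?N)"
    have key: "(real m - real j) * real (n - m) * ((real m + real j + 1) * real (n - m))
        - (real (n - m) - real j) * real m * ((real (n - m) + real j + 1) * real m)
        = (?N - ?M) * (?M * ?N - real j * (real j + 1) * (?N + ?M))" for j
      by (simp add: algebra_simps)
    have RL: "(\<Sum>j\<in>{1..n}. y j) \<le> (\<Sum>j\<in>{1..n}. x j)"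
    proof (rule crossing[where P = P])
      show "x 0 = y 0" using x0 y0 by simp
      show "P i" if "i \<le> j" "P j" for i j
      proof -
        have "real i * (real i + 1) \<le> real j * (real j + 1)"
          using that(1) by (intro mult_mono) auto
        hence "real i * (real i + 1) * (?N + ?M) \<le> real j * (real j + 1) * (?N + ?M)"
          by (intro mult_right_mono) auto
        thus ?thesis using that(2) unfolding P_def by linarith
      qed
      show "y (Suc j) \<le> x (Suc j)" if "P j" "y j \<le> x j" for j
      proof -
        have jm: "j < m"
        proof (rule ccontr)
          assume "\<not> j < m"
          hence "real j \<ge> ?M" by simp
          hence "real j * (real j + 1) \<ge> ?M * (?M + 1)" by (intro mult_mono) auto
          hence "real j * (real j + 1) * (?N + ?M) \<ge> ?M * (?M + 1) * (?N + ?M)"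
            by (intro mult_right_mono) auto
          moreover have "?M * (?M + 1) * (?N + ?M) > ?M * ?N"
          proof -
            have "?N < (?M + 1) * (?N + ?M)" using M12 NM
              by (simp add: algebra_simps) (rule add_pos_nonneg; simp)
            hence "?M * ?N < ?M * ((?M + 1) * (?N + ?M))"
              by (rule mult_strict_left_mono) (use M12 in simp)
            thus ?thesis by (simp add: ac_simps)
          qed
          ultimately show False using that(1) unfolding P_def by linarith
        qed
        have jN: "j \<le> n - m" using jm True by simp
        define D1 where "D1 = (?N + real j + 1) * ?M"
        define E1 where "E1 = (?M - real j) * ?N"
        define D2 where "D2 = (?M + real j + 1) * ?N"
        define E2 where "E2 = real (n - (m + j)) * ?M"
        have D1p: "D1 > 0" unfolding D1_def using M12 by simp
        have D2p: "D2 > 0" unfolding D2_def using M12 NM by simp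
        have E2nn: "E2 \<ge> 0" unfolding E2_def by simp
        have pos: "0 \<le> (?N - ?M) * (?M * ?N - real j * (real j + 1) * (?N + ?M))"
          using NM that(1) unfolding P_def by (intro mult_nonneg_nonneg) auto
        have cmp: "E2 * D1 \<le> E1 * D2"
          unfolding D1_def D2_def E1_def E2_def yNj[OF jN] using key[of j] pos by linarith
        have "y (Suc j) * (D1 * D2) = y j * E2 * D1" using yr[of j] unfolding D2_def E2_def by (simp add: ac_simps)
        also have "\<dots> \<le> x j * E2 * D1" using that(2) E2nn D1p by (intro mult_right_mono) auto
        also have "\<dots> \<le> x j * (E1 * D2)"
        proof -
          have "x j * (E2 * D1) \<le> x j * (E1 * D2)" using cmp xnn[of j] by (rule mult_left_mono)
          thus ?thesis by (simp add: ac_simps)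
        qed
        also have "\<dots> = x (Suc j) * (D1 * D2)" using xr[OF jm] unfolding D1_def E1_def by (simp add: ac_simps)
        finally show ?thesis using D1p D2p by simp
      qed
      show "x (Suc j) \<le> y (Suc j)" if "\<not> P j" "x j \<le> y j" for j
      proof (cases "j < m")
        case False thus ?thesis using xz ynn by simp
      next
        case jm: True
        have jN: "j \<le> n - m" using jm True by simp
        define D1 where "D1 = (?N + real j + 1) * ?M"
        define E1 where "E1 = (?M - real j) * ?N"
        define D2 where "D2 = (?M + real j + 1) * ?N"
        define E2 where "E2 = real (n - (m + j)) * ?M"
        have D1p: "D1 > 0" unfolding D1_def using M12 by simp
        have D2p: "D2 > 0" unfolding D2_def using M12 NM by simp
        have E2nn: "E2 \<ge> 0" unfolding E2_def by simp
        have pos: "(?N - ?M) * (?M * ?N - real j * (real j + 1) * (?N + ?M)) \<le> 0"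
          using NM that(1) unfolding P_def by (intro mult_nonneg_nonpos) auto
        have cmp: "E1 * D2 \<le> E2 * D1"
          unfolding D1_def D2_def E1_def E2_def yNj[OF jN] using key[of j] pos by linarith
        have "x (Suc j) * (D1 * D2) = x j * (E1 * D2)" using xr[OF jm] unfolding D1_def E1_def by (simp add: ac_simps)
        also have "\<dots> \<le> x j * (E2 * D1)" using cmp xnn[of j] by (simp add: mult_left_mono)
        also have "\<dots> \<le> y j * (E2 * D1)" using that(2) E2nn D1p by (intro mult_right_mono) auto
        also have "\<dots> = y (Suc j) * (D1 * D2)" using yr[of j] unfolding D2_def E2_def by (simp add: ac_simps)
        finally show ?thesis using D1p D2p by simp
      qed
      show "(\<Sum>j\<in>{1..n}. real j * x j) = (\<Sum>j\<in>{1..n}. real j * y j)" by (rule mom)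
    qed
    have N12: "?N \<ge> 12" using NM M12 by simp
    have Npos: "0 < n - m" using N12 by simp
    have a1: "12/13 * x 0 \<le> x 1"
    proof -
      have c: "12/13 * ((?N + real (0::nat) + 1) * ?M) \<le> (?M - real (0::nat)) * ?N"
        using auxI0[OF M12 N12] by simp
      show ?thesis using xstep[OF _ c] M12 by (simp add: eval_nat_numeral)
    qed
    have b1: "12/13 * y 0 \<le> y 1"
    proof -
      have c: "12/13 * ((?M + real (0::nat) + 1) * ?N) \<le> real (n - (m + 0)) * ?M"
        using auxI0[OF N12 M12] yNj[of 0] N12 by (simp add: algebra_simps)
      show ?thesis using ystep[OF Npos c] by (simp add: eval_nat_numeral)
    qed
    have a2: "11/14 * x 1 \<le> x 2"
    proof -
      have c: "11/14 * ((?N + real (1::nat) + 1) * ?M) \<le> (?M - real (1::nat)) * ?N"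
        using auxI1[OF M12 N12] by simp
      show ?thesis using xstep[OF _ c] M12 by (simp add: eval_nat_numeral)
    qed
    have b2: "11/14 * y 1 \<le> y 2"
    proof -
      have c: "11/14 * ((?M + real (1::nat) + 1) * ?N) \<le> real (n - (m + 1)) * ?M"
        using auxI1[OF N12 M12] yNj[of 1] N12 by (simp add: algebra_simps)
      show ?thesis using ystep[OF Npos c] by (simp add: eval_nat_numeral)
    qed
    have a3: "2/3 * x 2 \<le> x 3"
    proof -
      have c: "2/3 * ((?N + real (2::nat) + 1) * ?M) \<le> (?M - real (2::nat)) * ?N"
        using auxI2[OF M12 N12] by simp
      show ?thesis using xstep[OF _ c] M12 by (simp add: eval_nat_numeral)
    qed
    have b3: "2/3 * y 2 \<le> y 3"
    proof -
      have c: "2/3 * ((?M + real (2::nat) + 1) * ?N) \<le> real (n - (m + 2)) * ?M"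
        using auxI2[OF N12 M12] yNj[of 2] N12 by (simp add: algebra_simps)
      show ?thesis using ystep[OF Npos c] by (simp add: eval_nat_numeral)
    qed
    show ?thesis using a1 a2 a3 b1 b2 b3 L5 R5 RL Lsum total x0 y0 xnn[of 4] xnn[of 5] ynn[of 4] ynn[of 5]
      by linarith
  next
    case False
    let ?M = "real m" and ?N = "real (n - m)"
    have NM: "?N < ?M" using False by simp
    have N49: "?N \<ge> 49" using assms NNe by simp
    have M49: "?M \<ge> 49" using NM N49 by simp
    have Npos: "0 < n - m" using N49 by simp
    have step: "y (Suc (Suc j)) \<le> x (Suc j)" if "y (Suc j) \<le> x j" for j
    proof (cases "n - m \<le> Suc j")
      case True
      hence "y (Suc (Suc j)) = 0" by (intro yz) simp
      thus ?thesis using xnn by simp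
    next
      case c2: False
      have jm: "j < m" using c2 False by simp
      have jN: "Suc j \<le> n - m" using c2 by simp
      define D1 where "D1 = (?N + real j + 1) * ?M"
      define E1 where "E1 = (?M - real j) * ?N"
      define D2 where "D2 = (?M + real (Suc j) + 1) * ?N"
      define E2 where "E2 = real (n - (m + Suc j)) * ?M"
      have D1p: "D1 > 0" unfolding D1_def using M49 by simp
      have D2p: "D2 > 0" unfolding D2_def using M49 N49 by simp
      have E2nn: "E2 \<ge> 0" unfolding E2_def by simp
      have key2: "E1 * D2 - E2 * D1 = ?N * ?N * (2 * ?M + 1) + (?M * ?M - ?N * ?N) * ((real j + 1) * (real j + 1))"
        unfolding D1_def D2_def E1_def E2_def yNj[OF jN] by (simp add: algebra_simps)
      have p1: "0 \<le> ?N * ?N * (2 * ?M + 1)" by simp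
      have "?N * ?N \<le> ?M * ?M" using NM by (intro mult_mono) auto
      hence p2: "0 \<le> (?M * ?M - ?N * ?N) * ((real j + 1) * (real j + 1))" by simp
      have cmp: "E2 * D1 \<le> E1 * D2" using key2 p1 p2 by linarith
      have "y (Suc (Suc j)) * (D1 * D2) = y (Suc j) * E2 * D1" using yr[of "Suc j"] unfolding D2_def E2_def by (simp add: ac_simps)
      also have "\<dots> \<le> x j * E2 * D1" using that E2nn D1p by (intro mult_right_mono) auto
      also have "\<dots> \<le> x j * (E1 * D2)"
      proof -
        have "x j * (E2 * D1) \<le> x j * (E1 * D2)" using cmp xnn[of j] by (rule mult_left_mono)
        thus ?thesis by (simp add: ac_simps)
      qed
      also have "\<dots> = x (Suc j) * (D1 * D2)" using xr[OF jm] unfolding D1_def E1_def by (simp add: ac_simps)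
      finally show ?thesis using D1p D2p by simp
    qed
    have y1: "y 1 \<le> x 0"
    proof -
      have "y 1 * ((?M + 1) * ?N) = x 0 * (?M * ?N)" using yr[of 0] x0 y0 by (simp add: ac_simps)
      also have "\<dots> \<le> x 0 * ((?M + 1) * ?N)" using xnn[of 0] by (intro mult_left_mono) (auto simp: algebra_simps)
      finally have "y 1 * ((?M + 1) * ?N) \<le> x 0 * ((?M + 1) * ?N)" .
      moreover have "0 < (?M + 1) * ?N" using M49 N49 by simp
      ultimately show ?thesis by (rule mult_right_le_imp_le)
    qed
    have all: "y (Suc (Suc j)) \<le> x (Suc j)" for j
    proof (induction j)
      case 0 show ?case using step[of 0] y1 by simp
    next
      case (Suc j) thus ?case using step by blast
    qed
    have S1: "(\<Sum>j\<in>{1..n}. y (Suc j)) \<le> (\<Sum>j\<in>{1..n}. x j)"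
    proof (rule sum_mono)
      fix j assume "j \<in> {1..n}"
      then obtain i where "j = Suc i" by (cases j) auto
      thus "y (Suc j) \<le> x j" using all[of i] by simp
    qed
    have S2: "(\<Sum>j\<in>{1..n}. y j) \<le> y 1 + (\<Sum>j\<in>{1..n}. y (Suc j))"
    proof -
      have "(\<Sum>j\<in>{1..n}. y j) = y 1 + (\<Sum>j\<in>{2..n}. y j)"
        using assms(1) by (subst sum.atLeast_Suc_atMost) (auto simp: numeral_2_eq_2)
      also have "(\<Sum>j\<in>{2..n}. y j) \<le> (\<Sum>j\<in>{2..Suc n}. y j)"
        by (rule sum_mono2) (use ynn in auto)
      also have "(\<Sum>j\<in>{2..Suc n}. y j) = (\<Sum>j\<in>{1..n}. y (Suc j))"
        using sum.shift_bounds_cl_Suc_ivl[of y 1 n] by (simp add: numeral_2_eq_2)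
      finally show ?thesis by simp
    qed
    have a1: "49/50 * x 0 \<le> x 1"
    proof -
      have c: "49/50 * ((?N + real (0::nat) + 1) * ?M) \<le> (?M - real (0::nat)) * ?N"
        using auxII0[OF M49 N49] by simp
      show ?thesis using xstep[OF _ c] M49 by (simp add: eval_nat_numeral)
    qed
    have b1: "49/50 * y 0 \<le> y 1"
    proof -
      have c: "49/50 * ((?M + real (0::nat) + 1) * ?N) \<le> real (n - (m + 0)) * ?M"
        using auxII0[OF N49 M49] yNj[of 0] N49 by (simp add: algebra_simps)
      show ?thesis using ystep[OF Npos c] by (simp add: eval_nat_numeral)
    qed
    have a2: "48/51 * x 1 \<le> x 2"
    proof -
      have c: "48/51 * ((?N + real (1::nat) + 1) * ?M) \<le> (?M - real (1::nat)) * ?N"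
        using auxII1[OF M49 N49] by simp
      show ?thesis using xstep[OF _ c] M49 by (simp add: eval_nat_numeral)
    qed
    have b2: "48/51 * y 1 \<le> y 2"
    proof -
      have c: "48/51 * ((?M + real (1::nat) + 1) * ?N) \<le> real (n - (m + 1)) * ?M"
        using auxII1[OF N49 M49] yNj[of 1] N49 by (simp add: algebra_simps)
      show ?thesis using ystep[OF Npos c] by (simp add: eval_nat_numeral)
    qed
    have a3: "47/52 * x 2 \<le> x 3"
    proof -
      have c: "47/52 * ((?N + real (2::nat) + 1) * ?M) \<le> (?M - real (2::nat)) * ?N"
        using auxII2[OF M49 N49] by simp
      show ?thesis using xstep[OF _ c] M49 by (simp add: eval_nat_numeral)
    qed
    have b3: "47/52 * y 2 \<le> y 3"
    proof -
      have c: "47/52 * ((?M + real (2::nat) + 1) * ?N) \<le> real (n - (m + 2)) * ?M"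
        using auxII2[OF N49 M49] yNj[of 2] N49 by (simp add: algebra_simps)
      show ?thesis using ystep[OF Npos c] by (simp add: eval_nat_numeral)
    qed
    have a4: "46/53 * x 3 \<le> x 4"
    proof -
      have c: "46/53 * ((?N + real (3::nat) + 1) * ?M) \<le> (?M - real (3::nat)) * ?N"
        using auxII3[OF M49 N49] by simp
      show ?thesis using xstep[OF _ c] M49 by (simp add: eval_nat_numeral)
    qed
    have b4: "46/53 * y 3 \<le> y 4"
    proof -
      have c: "46/53 * ((?M + real (3::nat) + 1) * ?N) \<le> real (n - (m + 3)) * ?M"
        using auxII3[OF N49 M49] yNj[of 3] N49 by (simp add: algebra_simps)
      show ?thesis using ystep[OF Npos c] by (simp add: eval_nat_numeral)
    qed
    have a5: "45/54 * x 4 \<le> x 5"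
    proof -
      have c: "45/54 * ((?N + real (4::nat) + 1) * ?M) \<le> (?M - real (4::nat)) * ?N"
        using auxII4[OF M49 N49] by simp
      show ?thesis using xstep[OF _ c] M49 by (simp add: eval_nat_numeral)
    qed
    have b5: "45/54 * y 4 \<le> y 5"
    proof -
      have c: "45/54 * ((?M + real (4::nat) + 1) * ?N) \<le> real (n - (m + 4)) * ?M"
        using auxII4[OF N49 M49] yNj[of 4] N49 by (simp add: algebra_simps)
      show ?thesis using ystep[OF Npos c] by (simp add: eval_nat_numeral)
    qed
    show ?thesis using a1 a2 a3 a4 a5 b1 b2 b3 b4 b5 L5 R5 S1 S2 y1 Lsum total x0 y0
      by linarith
  qed
qed

end
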